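(* Let $d\in\mathbb N$, let $T\subset\mathbb R^d$ be a compact interval and $\mu$ a finite Borel measure on $T$, and let $q\ge1$. Let $U^X=(U^X_t)_{t\in T}$ and $U^Y=(U^Y_t)_{t\in T}$ be copula processes on a common probability space, and let $(F_{\tilde X_t})_{t\in T}$, $(F_{\tilde Y_t})_{t\in T}$ be families of one-dimensional distribution functions with finite $q$-th moments. Define $\tilde X_t:=F_{\tilde X_t}^{[-1]}(U^X_t)$ and $\tilde Y_t:=F_{\tilde Y_t}^{[-1]}(U^Y_t)$. Assume each $F_{\tilde Y_t}$ is absolutely continuous and strictly increasing, with density $f_{\tilde Y_t}$ satisfying $\|f_{\tilde Y}\|_\infty:=\sup_{t\in T,x\in\mathbb R}|f_{\tilde Y_t}(x)|<\infty$. Then $$\|U^X-U^Y\|_{L^q(T\times\Omega)}\le\|f_{\tilde Y}\|_\infty\Big(\|\tilde X-\tilde Y\|_{L^q(T\times\Omega)}+\big\|\mathbb W_q^q(F_{\tilde X_\cdot},F_{\tilde Y_\cdot})\big\|_{L^1(T)}^{1/q}\Big),$$ and in particular $$\|U^X-U^Y\|_{L^q(T\times\Omega)}\le2\|f_{\tilde Y}\|_\infty\|\tilde X-\tilde Y\|_{L^q(T\times\Omega)}.$$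
   Context: A copula process is a process each of whose coordinates is uniformly distributed on $[0,1]$. For a distribution function $F$, $F^{[-1]}(u):=\inf\{x\in\mathbb R:F(x)\ge u\}$. $L^q(T\times\Omega)$ is taken with respect to $\mu\otimes\mathbb P$ and $L^1(T)$ with respect to $\mu$. $\mathbb W_q^q(F_{\tilde X_t},F_{\tilde Y_t})=\int_0^1|F_{\tilde X_t}^{[-1]}(u)-F_{\tilde Y_t}^{[-1]}(u)|^qdu$ is the $q$-th power of the $q$-Wasserstein distance of the one-dimensional laws. *)

theory Defs
  imports "HOL-Probability.Probability"
begin

definition gen_inv :: "(real \<Rightarrow> real) \<Rightarrow> real \<Rightarrow> real" where
  "gen_inv F u = Inf {x. u \<le> F x}"

text \<open>Real power on [0,\<infinity>], with \<infinity> powr p = \<infinity> (used for p > 0).\<close>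
definition enn_powr :: "ennreal \<Rightarrow> real \<Rightarrow> ennreal" where
  "enn_powr x p = (if x = \<infinity> then \<infinity> else ennreal (enn2real x powr p))"

definition Lq_norm :: "'a measure \<Rightarrow> real \<Rightarrow> ('a \<Rightarrow> real) \<Rightarrow> ennreal" where
  "Lq_norm M q f = enn_powr (\<integral>\<^sup>+ z. ennreal (\<bar>f z\<bar> powr q) \<partial>M) (1 / q)"

definition distfun_moment :: "real \<Rightarrow> (real \<Rightarrow> real) \<Rightarrow> bool" where
  "distfun_moment q F \<longleftrightarrow> (\<exists>M. real_distribution M \<and> F = cdf M \<and>
      (\<integral>\<^sup>+ x. ennreal (\<bar>x\<bar> powr q) \<partial>M) < \<infinity>)"

text \<open>q-th power of the q-Wasserstein distance of two 1-d laws via quantiles.\<close>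
definition Wq_pow :: "real \<Rightarrow> (real \<Rightarrow> real) \<Rightarrow> (real \<Rightarrow> real) \<Rightarrow> ennreal" where
  "Wq_pow q F G = (\<integral>\<^sup>+ u \<in> {0<..<1}. ennreal (\<bar>gen_inv F u - gen_inv G u\<bar> powr q) \<partial>lborel)"

definition copula_process :: "'w measure \<Rightarrow> 't set \<Rightarrow> ('t \<Rightarrow> 'w \<Rightarrow> real) \<Rightarrow> bool" where
  "copula_process P T U \<longleftrightarrow> (\<forall>t\<in>T. U t \<in> borel_measurable P \<and>
      distr P borel (U t) = uniform_measure lborel {0..1})"

end

theory Submission
  imports Defs
begin


lemma ennreal_diff_Ioo:
  "ennreal (x - y - s) = (\<integral>\<^sup>+ r. indicator {y + s <..< x} r \<partial>lborel)"
  by (cases "y + s \<le> x") (auto simp: ennreal_eq_0_iff)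

lemma layer_pos:
  fixes P :: "'w measure"
  assumes P: "prob_space P" and f[measurable]: "f \<in> borel_measurable P" and g[measurable]: "g \<in> borel_measurable P"
  shows "(\<integral>\<^sup>+ \<omega>. ennreal (f \<omega> - g \<omega> - s) \<partial>P) =
     (\<integral>\<^sup>+ r. emeasure P {\<omega>\<in>space P. g \<omega> + s < r \<and> r < f \<omega>} \<partial>lborel)"
proof -
  interpret prob_space P by fact
  interpret pair_sigma_finite P lborel
    by (simp add: lborel.sigma_finite_measure_axioms pair_sigma_finite.intro sigma_finite_measure_axioms)
  have "(\<integral>\<^sup>+ \<omega>. ennreal (f \<omega> - g \<omega> - s) \<partial>P) = (\<integral>\<^sup>+ \<omega>. (\<integral>\<^sup>+ r. indicator {g \<omega> + s <..< f \<omega>} r \<partial>lborel) \<partial>P)"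
    by (simp add: ennreal_diff_Ioo)
  also have "\<dots> = (\<integral>\<^sup>+ r. (\<integral>\<^sup>+ \<omega>. indicator {g \<omega> + s <..< f \<omega>} r \<partial>P) \<partial>lborel)"
  proof (rule Fubini'[symmetric])
    have "(\<lambda>(\<omega>, r). indicator {g \<omega> + s <..< f \<omega>} r :: ennreal) = (\<lambda>x. if g (fst x) + s < snd x \<and> snd x < f (fst x) then 1 else 0)"
      by (auto simp: indicator_def fun_eq_iff)
    also have "\<dots> \<in> borel_measurable (P \<Otimes>\<^sub>M lborel)"
      by measurable
    finally show "(\<lambda>(\<omega>, r). indicator {g \<omega> + s <..< f \<omega>} r :: ennreal) \<in> borel_measurable (P \<Otimes>\<^sub>M lborel)" .
  qed
  also have "\<dots> = (\<integral>\<^sup>+ r. emeasure P {\<omega>\<in>space P. g \<omega> + s < r \<and> r < f \<omega>} \<partial>lborel)"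
  proof (rule nn_integral_cong)
    fix r
    have "(\<integral>\<^sup>+ \<omega>. indicator {g \<omega> + s <..< f \<omega>} r \<partial>P) = (\<integral>\<^sup>+ \<omega>. indicator {\<omega>\<in>space P. g \<omega> + s < r \<and> r < f \<omega>} \<omega> \<partial>P)"
      by (rule nn_integral_cong) (auto simp: indicator_def)
    also have "\<dots> = emeasure P {\<omega>\<in>space P. g \<omega> + s < r \<and> r < f \<omega>}"
      by (rule nn_integral_indicator) measurable
    finally show "(\<integral>\<^sup>+ \<omega>. indicator {g \<omega> + s <..< f \<omega>} r \<partial>P) = emeasure P {\<omega>\<in>space P. g \<omega> + s < r \<and> r < f \<omega>}" .
  qed
  finally show ?thesis .
qed

lemma q1:
  fixes P :: "'w measure"
  assumes P: "prob_space P"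
    and m[measurable]: "X1 \<in> borel_measurable P" "X2 \<in> borel_measurable P"
       "A \<in> borel_measurable P" "B \<in> borel_measurable P"
    and dA: "\<And>r. emeasure P {\<omega>\<in>space P. r < A \<omega>} = emeasure P {\<omega>\<in>space P. r < X1 \<omega>}"
    and dB: "\<And>r. emeasure P {\<omega>\<in>space P. r \<le> B \<omega>} = emeasure P {\<omega>\<in>space P. r \<le> X2 \<omega>}"
    and O: "Om \<in> sets P" "AE \<omega> in P. \<omega> \<in> Om"
    and comon: "\<And>\<omega> \<omega>'. \<omega> \<in> Om \<Longrightarrow> \<omega>' \<in> Om \<Longrightarrow> X2 \<omega> < X2 \<omega>' \<Longrightarrow> X1 \<omega> \<le> X1 \<omega>'"
  shows "(\<integral>\<^sup>+ \<omega>. ennreal (X1 \<omega> - X2 \<omega> - s) \<partial>P) \<le> (\<integral>\<^sup>+ \<omega>. ennreal (A \<omega> - B \<omega> - s) \<partial>P)"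
proof -
  interpret prob_space P by fact
  have "(\<integral>\<^sup>+ r. emeasure P {\<omega>\<in>space P. X2 \<omega> + s < r \<and> r < X1 \<omega>} \<partial>lborel)
     \<le> (\<integral>\<^sup>+ r. emeasure P {\<omega>\<in>space P. B \<omega> + s < r \<and> r < A \<omega>} \<partial>lborel)"
  proof (rule nn_integral_mono)
    fix r
    define E1 where "E1 = {\<omega>\<in>space P. r < X1 \<omega>}"
    define E2 where "E2 = {\<omega>\<in>space P. r - s \<le> X2 \<omega>}"
    have [measurable]: "E1 \<in> sets P" unfolding E1_def by measurable
    have [measurable]: "E2 \<in> sets P" unfolding E2_def by measurable
    have eq12: "{\<omega>\<in>space P. X2 \<omega> + s < r \<and> r < X1 \<omega>} = E1 - E2"
      unfolding E1_def E2_def by auto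
    have c1: "emeasure P {\<omega>\<in>space P. X2 \<omega> + s < r \<and> r < X1 \<omega>} = emeasure P E1 - emeasure P E2"
    proof (cases "\<exists>\<omega>0\<in>Om. \<omega>0 \<in> E1 - E2")
      case True
      then obtain w0 where w0: "w0 \<in> Om" "w0 \<in> E1" "w0 \<notin> E2" by auto
      have sub: "\<And>\<omega>. \<omega> \<in> Om \<Longrightarrow> \<omega> \<in> E2 \<Longrightarrow> \<omega> \<in> E1"
      proof -
        fix \<omega> assume "\<omega> \<in> Om" "\<omega> \<in> E2"
        then have "X2 w0 < X2 \<omega>" using w0 unfolding E1_def E2_def by auto
        then have "X1 w0 \<le> X1 \<omega>" using comon[OF w0(1) \<open>\<omega>\<in>Om\<close>] by auto
        then show "\<omega> \<in> E1" using w0 \<open>\<omega> \<in> E2\<close> unfolding E1_def E2_def by auto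
      qed
      have "emeasure P (E1 \<inter> E2) = emeasure P E2"
      proof (rule emeasure_eq_AE)
        show "AE x in P. (x \<in> E1 \<inter> E2) = (x \<in> E2)"
          using O(2) by (rule eventually_mono) (use sub in blast)
      qed auto
      moreover have "emeasure P (E1 - E2) = emeasure P E1 - emeasure P (E1 \<inter> E2)"
      proof -
        have "E1 - E2 = E1 - (E1 \<inter> E2)" by auto
        then show ?thesis by (simp add: emeasure_Diff)
      qed
      ultimately show ?thesis using eq12 by simp
    next
      case False
      have "emeasure P (E1 - E2) = emeasure P {}"
      proof (rule emeasure_eq_AE)
        show "AE x in P. (x \<in> E1 - E2) = (x \<in> {})"
          using O(2) by (rule eventually_mono) (use False in blast)
      qed auto
      moreover have "emeasure P E1 \<le> emeasure P E2"
      proof -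
        have "emeasure P E1 = emeasure P (E1 \<inter> E2)"
        proof (rule emeasure_eq_AE)
          show "AE x in P. (x \<in> E1) = (x \<in> E1 \<inter> E2)"
            using O(2) by (rule eventually_mono) (use False in blast)
        qed auto
        also have "\<dots> \<le> emeasure P E2" by (rule emeasure_mono) auto
        finally show ?thesis .
      qed
      ultimately show ?thesis using eq12 by (simp add: diff_eq_0_iff_ennreal emeasure_finite less_top[symmetric])
    qed
    have e1: "emeasure P E1 = emeasure P {\<omega>\<in>space P. r < A \<omega>}" unfolding E1_def using dA by simp
    have e2: "emeasure P E2 = emeasure P {\<omega>\<in>space P. r - s \<le> B \<omega>}" unfolding E2_def using dB by simp
    have "emeasure P {\<omega>\<in>space P. r < A \<omega>} \<le> emeasure P ({\<omega>\<in>space P. B \<omega> + s < r \<and> r < A \<omega>} \<union> {\<omega>\<in>space P. r - s \<le> B \<omega>})"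
      by (rule emeasure_mono) auto
    also have "\<dots> \<le> emeasure P {\<omega>\<in>space P. B \<omega> + s < r \<and> r < A \<omega>} + emeasure P {\<omega>\<in>space P. r - s \<le> B \<omega>}"
    proof (rule emeasure_subadditive)
      show "{\<omega> \<in> space P. B \<omega> + s < r \<and> r < A \<omega>} \<in> sets P" by measurable
      show "{\<omega> \<in> space P. r - s \<le> B \<omega>} \<in> sets P" by measurable
    qed
    finally have le1: "emeasure P {\<omega>\<in>space P. r < A \<omega>} \<le> emeasure P {\<omega>\<in>space P. r - s \<le> B \<omega>} + emeasure P {\<omega>\<in>space P. B \<omega> + s < r \<and> r < A \<omega>}"
      by (simp only: add.commute)
    have "emeasure P {\<omega>\<in>space P. r < A \<omega>} - emeasure P {\<omega>\<in>space P. r - s \<le> B \<omega>} \<le> emeasure P {\<omega>\<in>space P. B \<omega> + s < r \<and> r < A \<omega>}"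
      unfolding ennreal_minus_le_iff using le1 emeasure_finite by simp
    then show "emeasure P {\<omega>\<in>space P. X2 \<omega> + s < r \<and> r < X1 \<omega>} \<le> emeasure P {\<omega>\<in>space P. B \<omega> + s < r \<and> r < A \<omega>}"
      using c1 e1 e2 by simp
  qed
  then show ?thesis by (simp add: layer_pos[OF P])
qed

lemma mix_hk:
  fixes q z :: real
  assumes q: "q > 1" and z: "z \<ge> 0"
  shows "((\<lambda>s. q * (q - 1) * s powr (q - 2) * (z - s)) has_integral z powr q) {0..z}"
proof -
  have i1: "((\<lambda>s. s powr (q - 2)) has_integral (z powr (q - 2 + 1) / (q - 2 + 1))) {0..z}"
    by (rule has_integral_powr_from_0) (use q z in auto)
  have i2: "((\<lambda>s. s powr (q - 1)) has_integral (z powr (q - 1 + 1) / (q - 1 + 1))) {0..z}"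
    by (rule has_integral_powr_from_0) (use q z in auto)
  have i3: "((\<lambda>s. (q * (q - 1) * z) * s powr (q - 2) - (q * (q - 1)) * s powr (q - 1)) has_integral
      ((q * (q - 1) * z) * (z powr (q - 2 + 1) / (q - 2 + 1)) - (q * (q - 1)) * (z powr (q - 1 + 1) / (q - 1 + 1)))) {0..z}"
    by (intro has_integral_diff has_integral_mult_right i1 i2)
  have val: "(q * (q - 1) * z) * (z powr (q - 2 + 1) / (q - 2 + 1)) - (q * (q - 1)) * (z powr (q - 1 + 1) / (q - 1 + 1)) = z powr q"
  proof -
    have a: "q - 2 + 1 = q - 1" "q - 1 + 1 = q" by auto
    have b: "z * z powr (q - 1) = z powr q" using powr_mult_base[OF z, of "q - 1"] by simp
    show ?thesis unfolding a using q b by (simp add: field_simps)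
  qed
  have pt: "q * (q - 1) * s powr (q - 2) * (z - s) = (q * (q - 1) * z) * s powr (q - 2) - (q * (q - 1)) * s powr (q - 1)"
    if "s \<in> {0..z}" for s
  proof -
    have "s * s powr (q - 2) = s powr (q - 1)" using powr_mult_base[of s "q - 2"] that by simp
    then show ?thesis by (simp add: algebra_simps)
  qed
  show ?thesis using i3 unfolding val by (rule has_integral_eq[rotated]) (use pt in auto)
qed

lemma mix:
  fixes q z :: real
  assumes q: "q > 1"
  shows "ennreal ((max z 0) powr q) =
    (\<integral>\<^sup>+ s. ennreal (q * (q - 1) * s powr (q - 2)) * indicator {0<..} s * ennreal (z - s) \<partial>lborel)"
proof (cases "z \<le> 0")
  case True
  have "(\<integral>\<^sup>+ s. ennreal (q * (q - 1) * s powr (q - 2)) * indicator {0<..} s * ennreal (z - s) \<partial>lborel) = (\<integral>\<^sup>+ (s::real). 0 \<partial>lborel)"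
    by (rule nn_integral_cong) (use True in \<open>auto simp: indicator_def ennreal_eq_0_iff\<close>)
  then show ?thesis using True q by simp
next
  case False
  then have z: "z \<ge> 0" by simp
  have "(\<integral>\<^sup>+ s. ennreal (q * (q - 1) * s powr (q - 2)) * indicator {0<..} s * ennreal (z - s) \<partial>lborel)
      = (\<integral>\<^sup>+ s. ennreal (q * (q - 1) * s powr (q - 2) * (z - s)) * indicator {0..z} s \<partial>lborel)"
  proof (rule nn_integral_cong)
    fix s :: real
    show "ennreal (q * (q - 1) * s powr (q - 2)) * indicator {0<..} s * ennreal (z - s) =
          ennreal (q * (q - 1) * s powr (q - 2) * (z - s)) * indicator {0..z} s"
    proof (cases "0 < s \<and> s \<le> z")
      case True
      then show ?thesis using q by (simp add: ennreal_mult[symmetric] indicator_def)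
    next
      case F: False
      then consider "s \<le> 0" | "s > z" by linarith
      then show ?thesis
      proof cases
        case 1
        then show ?thesis by (cases "s = 0") (auto simp: indicator_def)
      next
        case 2
        then show ?thesis using z by (auto simp: indicator_def ennreal_eq_0_iff)
      qed
    qed
  qed
  also have "\<dots> = ennreal (z powr q)"
    by (rule nn_integral_has_integral_lebesgue'[OF _ mix_hk[OF q z]]) (use q in \<open>auto intro!: mult_nonneg_nonneg\<close>)
  finally show ?thesis using z by simp
qed

lemma mix_int:
  fixes P :: "'w measure"
  assumes P: "prob_space P" and q: "q > 1"
    and f[measurable]: "f \<in> borel_measurable P" and g[measurable]: "g \<in> borel_measurable P"
  shows "(\<integral>\<^sup>+ \<omega>. ennreal ((max (f \<omega> - g \<omega>) 0) powr q) \<partial>P) =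
    (\<integral>\<^sup>+ s. ennreal (q * (q - 1) * s powr (q - 2)) * indicator {0<..} s * (\<integral>\<^sup>+ \<omega>. ennreal (f \<omega> - g \<omega> - s) \<partial>P) \<partial>lborel)"
proof -
  interpret prob_space P by fact
  interpret pair_sigma_finite P lborel
    by (simp add: lborel.sigma_finite_measure_axioms pair_sigma_finite.intro sigma_finite_measure_axioms)
  have "(\<integral>\<^sup>+ \<omega>. ennreal ((max (f \<omega> - g \<omega>) 0) powr q) \<partial>P) =
     (\<integral>\<^sup>+ \<omega>. (\<integral>\<^sup>+ s. ennreal (q * (q - 1) * s powr (q - 2)) * indicator {0<..} s * ennreal (f \<omega> - g \<omega> - s) \<partial>lborel) \<partial>P)"
    using mix[OF q] by (simp add: diff_diff_eq)
  also have "\<dots> = (\<integral>\<^sup>+ s. (\<integral>\<^sup>+ \<omega>. ennreal (q * (q - 1) * s powr (q - 2)) * indicator {0<..} s * ennreal (f \<omega> - g \<omega> - s) \<partial>P) \<partial>lborel)"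
    by (rule Fubini'[symmetric]) measurable
  also have "\<dots> = (\<integral>\<^sup>+ s. ennreal (q * (q - 1) * s powr (q - 2)) * indicator {0<..} s * (\<integral>\<^sup>+ \<omega>. ennreal (f \<omega> - g \<omega> - s) \<partial>P) \<partial>lborel)"
    by (rule nn_integral_cong) (simp add: nn_integral_cmult)
  finally show ?thesis .
qed

lemma qq:
  fixes P :: "'w measure"
  assumes P: "prob_space P" and q: "q \<ge> 1"
    and m[measurable]: "X1 \<in> borel_measurable P" "X2 \<in> borel_measurable P"
       "A \<in> borel_measurable P" "B \<in> borel_measurable P"
    and dA: "\<And>r. emeasure P {\<omega>\<in>space P. r < A \<omega>} = emeasure P {\<omega>\<in>space P. r < X1 \<omega>}"
    and dB: "\<And>r. emeasure P {\<omega>\<in>space P. r \<le> B \<omega>} = emeasure P {\<omega>\<in>space P. r \<le> X2 \<omega>}"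
    and O: "Om \<in> sets P" "AE \<omega> in P. \<omega> \<in> Om"
    and comon: "\<And>\<omega> \<omega>'. \<omega> \<in> Om \<Longrightarrow> \<omega>' \<in> Om \<Longrightarrow> X2 \<omega> < X2 \<omega>' \<Longrightarrow> X1 \<omega> \<le> X1 \<omega>'"
  shows "(\<integral>\<^sup>+ \<omega>. ennreal ((max (X1 \<omega> - X2 \<omega>) 0) powr q) \<partial>P) \<le> (\<integral>\<^sup>+ \<omega>. ennreal ((max (A \<omega> - B \<omega>) 0) powr q) \<partial>P)"
proof (cases "q = 1")
  case True
  have e: "ennreal ((max z 0) powr 1) = ennreal (z - 0)" for z :: real
    by (cases "z \<le> 0") (auto simp: ennreal_eq_0_iff)
  show ?thesis unfolding True e using q1[OF assms(1,3-) , of 0] by simp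
next
  case False
  then have q': "q > 1" using q by simp
  show ?thesis unfolding mix_int[OF P q' m(1,2)] mix_int[OF P q' m(3,4)]
    by (intro nn_integral_mono mult_left_mono q1[OF assms(1,3-)]) auto
qed

lemma comon:
  fixes P :: "'w measure"
  assumes P: "prob_space P" and q: "q \<ge> 1"
    and m[measurable]: "X1 \<in> borel_measurable P" "X2 \<in> borel_measurable P"
       "A \<in> borel_measurable P" "B \<in> borel_measurable P"
    and dA: "distr P borel A = distr P borel X1"
    and dB: "distr P borel B = distr P borel X2"
    and O: "Om \<in> sets P" "AE \<omega> in P. \<omega> \<in> Om"
    and comon1: "\<And>\<omega> \<omega>'. \<omega> \<in> Om \<Longrightarrow> \<omega>' \<in> Om \<Longrightarrow> X2 \<omega> < X2 \<omega>' \<Longrightarrow> X1 \<omega> \<le> X1 \<omega>'"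
    and comon2: "\<And>\<omega> \<omega>'. \<omega> \<in> Om \<Longrightarrow> \<omega>' \<in> Om \<Longrightarrow> X1 \<omega> < X1 \<omega>' \<Longrightarrow> X2 \<omega> \<le> X2 \<omega>'"
  shows "(\<integral>\<^sup>+ \<omega>. ennreal (\<bar>X1 \<omega> - X2 \<omega>\<bar> powr q) \<partial>P) \<le> (\<integral>\<^sup>+ \<omega>. ennreal (\<bar>A \<omega> - B \<omega>\<bar> powr q) \<partial>P)"
proof -
  have ev: "emeasure P {\<omega>\<in>space P. Z \<omega> \<in> S} = emeasure P {\<omega>\<in>space P. W \<omega> \<in> S}"
    if "distr P borel Z = distr P borel W" "Z \<in> borel_measurable P" "W \<in> borel_measurable P" "S \<in> sets borel" for Z W :: "'w \<Rightarrow> real" and S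
  proof -
    have "emeasure P {\<omega>\<in>space P. Z \<omega> \<in> S} = emeasure (distr P borel Z) S"
      using that(2,4) by (subst emeasure_distr) (auto intro!: arg_cong[where f="emeasure P"])
    also have "\<dots> = emeasure (distr P borel W) S" using that by simp
    also have "\<dots> = emeasure P {\<omega>\<in>space P. W \<omega> \<in> S}"
      using that(3,4) by (subst emeasure_distr) (auto intro!: arg_cong[where f="emeasure P"])
    finally show ?thesis .
  qed
  have dA1: "emeasure P {\<omega>\<in>space P. r < A \<omega>} = emeasure P {\<omega>\<in>space P. r < X1 \<omega>}" for r
    using ev[OF dA m(3,1), of "{r<..}"] by simp
  have dA2: "emeasure P {\<omega>\<in>space P. r \<le> A \<omega>} = emeasure P {\<omega>\<in>space P. r \<le> X1 \<omega>}" for r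
    using ev[OF dA m(3,1), of "{r..}"] by simp
  have dB1: "emeasure P {\<omega>\<in>space P. r < B \<omega>} = emeasure P {\<omega>\<in>space P. r < X2 \<omega>}" for r
    using ev[OF dB m(4,2), of "{r<..}"] by simp
  have dB2: "emeasure P {\<omega>\<in>space P. r \<le> B \<omega>} = emeasure P {\<omega>\<in>space P. r \<le> X2 \<omega>}" for r
    using ev[OF dB m(4,2), of "{r..}"] by simp
  have split: "ennreal (\<bar>z\<bar> powr q) = ennreal ((max z 0) powr q) + ennreal ((max (- z) 0) powr q)" for z :: real
    using q by (cases "z \<le> 0") auto
  have p1: "(\<integral>\<^sup>+ \<omega>. ennreal ((max (X1 \<omega> - X2 \<omega>) 0) powr q) \<partial>P) \<le> (\<integral>\<^sup>+ \<omega>. ennreal ((max (A \<omega> - B \<omega>) 0) powr q) \<partial>P)"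
    by (rule qq[OF P q m dA1 dB2 O comon1])
  have p2: "(\<integral>\<^sup>+ \<omega>. ennreal ((max (X2 \<omega> - X1 \<omega>) 0) powr q) \<partial>P) \<le> (\<integral>\<^sup>+ \<omega>. ennreal ((max (B \<omega> - A \<omega>) 0) powr q) \<partial>P)"
    by (rule qq[OF P q m(2,1,4,3) dB1 dA2 O comon2])
  have "(\<integral>\<^sup>+ \<omega>. ennreal (\<bar>X1 \<omega> - X2 \<omega>\<bar> powr q) \<partial>P) =
     (\<integral>\<^sup>+ \<omega>. ennreal ((max (X1 \<omega> - X2 \<omega>) 0) powr q) \<partial>P) + (\<integral>\<^sup>+ \<omega>. ennreal ((max (X2 \<omega> - X1 \<omega>) 0) powr q) \<partial>P)"
    unfolding split by (subst nn_integral_add[symmetric]) (auto)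
  also have "\<dots> \<le> (\<integral>\<^sup>+ \<omega>. ennreal ((max (A \<omega> - B \<omega>) 0) powr q) \<partial>P) + (\<integral>\<^sup>+ \<omega>. ennreal ((max (B \<omega> - A \<omega>) 0) powr q) \<partial>P)"
    by (intro add_mono p1 p2)
  also have "\<dots> = (\<integral>\<^sup>+ \<omega>. ennreal (\<bar>A \<omega> - B \<omega>\<bar> powr q) \<partial>P)"
    unfolding split by (subst nn_integral_add[symmetric]) (auto)
  finally show ?thesis .
qed



lemma distfun_props:
  assumes "distfun_moment q F"
  shows "mono F" "(F \<longlongrightarrow> 0) at_bot" "(F \<longlongrightarrow> 1) at_top" "\<And>x. 0 \<le> F x" "\<And>x. F x \<le> 1"
proof -
  obtain M where M: "real_distribution M" "F = cdf M"
    using assms unfolding distfun_moment_def by auto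
  interpret real_distribution M by fact
  show "mono F" unfolding M(2) mono_def using cdf_nondecreasing by blast
  show "(F \<longlongrightarrow> 0) at_bot" unfolding M(2) by (rule cdf_lim_at_bot)
  show "(F \<longlongrightarrow> 1) at_top" unfolding M(2) by (rule cdf_lim_at_top_prob)
  show "\<And>x. 0 \<le> F x" unfolding M(2) by (rule cdf_nonneg)
  show "\<And>x. F x \<le> 1" unfolding M(2) by (rule cdf_bounded_prob)
qed

lemma gen_inv_set:
  fixes F :: "real \<Rightarrow> real"
  assumes mono: "mono F" and lb: "(F \<longlongrightarrow> 0) at_bot" and lt: "(F \<longlongrightarrow> 1) at_top"
    and u: "0 < u" "u < 1"
  shows "{x. u \<le> F x} \<noteq> {}" "bdd_below {x. u \<le> F x}"
proof -
  have "eventually (\<lambda>x. F x > u) at_top" using order_tendstoD(1)[OF lt u(2)] by simp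
  then obtain x where "F x > u" by (auto simp: eventually_at_top_linorder)
  then show "{x. u \<le> F x} \<noteq> {}" by (auto intro: less_imp_le)
  have "eventually (\<lambda>x. F x < u) at_bot" using order_tendstoD(2)[OF lb u(1)] by simp
  then obtain x0 where x0: "\<And>x. x \<le> x0 \<Longrightarrow> F x < u" by (auto simp: eventually_at_bot_linorder)
  show "bdd_below {x. u \<le> F x}"
  proof (rule bdd_belowI)
    fix x assume "x \<in> {x. u \<le> F x}"
    then show "x0 \<le> x" using x0[of x] by force
  qed
qed

lemma gen_inv_mono:
  fixes F :: "real \<Rightarrow> real"
  assumes mono: "mono F" and lb: "(F \<longlongrightarrow> 0) at_bot" and lt: "(F \<longlongrightarrow> 1) at_top"
    and uv: "0 < u" "u \<le> v" "v < 1"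
  shows "gen_inv F u \<le> gen_inv F v"
  unfolding gen_inv_def
proof (rule cInf_superset_mono)
  show "{x. v \<le> F x} \<noteq> {}" using gen_inv_set[OF mono lb lt, of v] uv by auto
  show "bdd_below {x. u \<le> F x}" using gen_inv_set[OF mono lb lt, of u] uv by auto
  show "{x. v \<le> F x} \<subseteq> {x. u \<le> F x}" using uv by auto
qed

lemma gen_inv_meas:
  fixes F :: "real \<Rightarrow> real"
  assumes mono: "mono F" and lb: "(F \<longlongrightarrow> 0) at_bot" and lt: "(F \<longlongrightarrow> 1) at_top"
    and nn: "\<And>x. 0 \<le> F x" and le1: "\<And>x. F x \<le> 1"
  shows "gen_inv F \<in> borel_measurable borel"
proof (rule borel_measurable_piecewise_mono[of "{{..0}, {0<..<1}, {1}, {1<..}}"])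
  show "countable {{..0::real}, {0<..<1}, {1}, {1<..}}" by simp
  show "\<Union> {{..0}, {0<..<1}, {1}, {1<..}} = (UNIV :: real set)" by auto
  fix c assume c: "c \<in> {{..0}, {0<..<1}, {1::real}, {1<..}}"
  then show "c \<in> sets borel" by auto
  have c0: "gen_inv F u = gen_inv F 0" if "u \<le> 0" for u
  proof -
    have "{x. u \<le> F x} = UNIV"
    proof safe
      fix x show "u \<le> F x" using nn[of x] that by linarith
    qed simp
    moreover have "{x. 0 \<le> F x} = UNIV" using nn by auto
    ultimately show ?thesis unfolding gen_inv_def by simp
  qed
  have c1: "gen_inv F u = gen_inv F 2" if "u > 1" for u
  proof -
    have "{x. u \<le> F x} = {}"
    proof safe
      fix x assume "u \<le> F x" then show "x \<in> {}" using le1[of x] that by linarith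
    qed
    moreover have "{x. 2 \<le> F x} = {}"
    proof safe
      fix x assume "2 \<le> F x" then show "x \<in> {}" using le1[of x] by linarith
    qed
    ultimately show ?thesis unfolding gen_inv_def by simp
  qed
  from c consider "c = {..0}" | "c = {0<..<1}" | "c = {1}" | "c = {1<..}" by blast
  then show "mono_on c (gen_inv F)"
  proof cases
    case 1
    show ?thesis unfolding 1 mono_on_def using c0 by (metis atMost_iff order_refl)
  next
    case 2
    show ?thesis unfolding 2 mono_on_def
    proof safe
      fix u v :: real assume "u \<in> {0<..<1}" "v \<in> {0<..<1}" "u \<le> v"
      then show "gen_inv F u \<le> gen_inv F v" by (intro gen_inv_mono[OF mono lb lt]) auto
    qed
  next
    case 3
    show ?thesis unfolding 3 mono_on_def by simp
  next
    case 4
    show ?thesis unfolding 4 mono_on_def using c1 by (metis greaterThan_iff order_refl)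
  qed
qed

lemma gen_inv_right_inv:
  fixes G :: "real \<Rightarrow> real"
  assumes sm: "strict_mono G" and cont: "continuous_on UNIV G"
    and lb: "(G \<longlongrightarrow> 0) at_bot" and lt: "(G \<longlongrightarrow> 1) at_top"
    and u: "0 < u" "u < 1"
  shows "G (gen_inv G u) = u"
proof -
  have "eventually (\<lambda>x. G x > u) at_top" using order_tendstoD(1)[OF lt u(2)] by simp
  then obtain x2 where x2: "G x2 > u" by (auto simp: eventually_at_top_linorder)
  have "eventually (\<lambda>x. G x < u) at_bot" using order_tendstoD(2)[OF lb u(1)] by simp
  then obtain x1 where x1: "G x1 < u" by (auto simp: eventually_at_bot_linorder)
  have "x1 \<le> x2"
  proof (rule ccontr)
    assume "\<not> x1 \<le> x2" then have "G x2 < G x1" using sm by (simp add: strict_mono_less)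
    then show False using x1 x2 by simp
  qed
  then obtain x0 where x0: "G x0 = u"
    using IVT'[of G x1 u x2] x1 x2 continuous_on_subset[OF cont] by fastforce
  have "{x. u \<le> G x} = {x0..}"
    using x0 sm by (auto simp: strict_mono_less_eq)
  then show ?thesis unfolding gen_inv_def using x0 by simp
qed

lemma lip_G:
  fixes G g :: "real \<Rightarrow> real"
  assumes gm: "g \<in> borel_measurable borel" and gnn: "\<And>x. 0 \<le> g x" and gK: "\<And>x. g x \<le> K"
    and G: "\<And>x. G x = (\<integral>y\<in>{..x}. g y \<partial>lborel)" and sm: "strict_mono G" and Gnn: "\<And>x. 0 \<le> G x"
    and xy: "x \<le> y"
  shows "G y - G x \<le> K * (y - x)"
proof -
  have si: "set_integrable lborel {..z} g" for z
  proof (rule ccontr)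
    assume "\<not> set_integrable lborel {..z} g"
    then have "G z = 0" unfolding G set_lebesgue_integral_def set_integrable_def
      by (simp add: not_integrable_integral_eq)
    moreover have "G (z - 1) < G z" using sm by (simp add: strict_mono_less)
    ultimately show False using Gnn[of "z - 1"] by simp
  qed
  have si2: "set_integrable lborel {x<..y} g"
    by (rule set_integrable_subset[OF si[of y]]) auto
  have sK: "set_integrable lborel {x<..y} (\<lambda>_. K)"
    unfolding set_integrable_def
    by (intro integrable_scaleR_left integrable_real_indicator) (use xy in auto)
  have "G y = (\<integral>z\<in>{..x} \<union> {x<..y}. g z \<partial>lborel)"
    unfolding G using xy by (intro arg_cong[where f="\<lambda>A. set_lebesgue_integral lborel A g"]) auto
  also have "\<dots> = G x + (\<integral>z\<in>{x<..y}. g z \<partial>lborel)"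
    unfolding G by (rule set_integral_Un) (auto intro: si si2)
  finally have "G y - G x = (\<integral>z\<in>{x<..y}. g z \<partial>lborel)" by simp
  also have "\<dots> \<le> (\<integral>z\<in>{x<..y}. K \<partial>lborel)"
    by (rule set_integral_mono[OF si2 sK gK])
  also have "\<dots> = K * (y - x)"
    using xy by (subst set_integral_const) auto
  finally show ?thesis .
qed

lemma conv_pow:
  fixes x y l q :: real
  assumes q: "q \<ge> 1" and x: "x \<ge> 0" and y: "y \<ge> 0" and l: "0 < l" "l < 1"
  shows "(x + y) powr q \<le> l powr (1 - q) * x powr q + (1 - l) powr (1 - q) * y powr q"
proof -
  have ge1: "1 \<le> b powr (1 - q)" if "0 < b" "b \<le> 1" for b :: real
  proof -
    have "b powr (1 - q) = (1 / b) powr (q - 1)"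
      using that by (simp add: powr_divide powr_minus_divide[symmetric] powr_minus)
    also have "1 \<le> \<dots>" using that q by (intro ge_one_powr_ge_zero) auto
    finally show ?thesis .
  qed
  consider "x = 0" | "y = 0" | "x > 0" "y > 0" using x y by linarith
  then show ?thesis
  proof cases
    case 1
    have "y powr q \<le> (1 - l) powr (1 - q) * y powr q"
    proof -
      have "1 \<le> (1 - l) powr (1 - q)" using ge1[of "1 - l"] l by auto
      then have "1 * y powr q \<le> (1 - l) powr (1 - q) * y powr q" by (rule mult_right_mono) auto
      then show ?thesis by simp
    qed
    then show ?thesis using 1 q by simp
  next
    case 2
    have "x powr q \<le> l powr (1 - q) * x powr q"
    proof -
      have "1 \<le> l powr (1 - q)" using ge1[of l] l by auto
      then have "1 * x powr q \<le> l powr (1 - q) * x powr q" by (rule mult_right_mono) auto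
      then show ?thesis by simp
    qed
    then show ?thesis using 2 q by simp
  next
    case 3
    have "(x + y) powr q = ((1 - (1 - l)) *\<^sub>R (x / l) + (1 - l) *\<^sub>R (y / (1 - l))) powr q"
      using l by simp
    also have "\<dots> \<le> (1 - (1 - l)) * (x / l) powr q + (1 - l) * (y / (1 - l)) powr q"
      by (rule convex_onD[OF powr_convex[OF q]]) (use l 3 in auto)
    also have "\<dots> = l powr (1 - q) * x powr q + (1 - l) powr (1 - q) * y powr q"
    proof -
      have a: "l * (x / l) powr q = l powr (1 - q) * x powr q"
        using l 3 by (simp add: powr_divide powr_diff)
      have b: "(1 - l) * (y / (1 - l)) powr q = (1 - l) powr (1 - q) * y powr q"
        using l 3 by (simp add: powr_divide powr_diff)
      show ?thesis using a b by simp
    qed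
    finally show ?thesis .
  qed
qed

lemma split_int:
  fixes M :: "'w measure" and f g h :: "'w \<Rightarrow> real"
  assumes q: "q \<ge> 1" and c: "c \<ge> 0" and l: "0 < l" "l < 1"
    and fm[measurable]: "f \<in> borel_measurable M" and gm[measurable]: "g \<in> borel_measurable M"
    and h: "AE \<omega> in M. \<bar>h \<omega>\<bar> \<le> c * \<bar>f \<omega>\<bar> + c * \<bar>g \<omega>\<bar>"
  shows "(\<integral>\<^sup>+ \<omega>. ennreal (\<bar>h \<omega>\<bar> powr q) \<partial>M) \<le> ennreal (c powr q) *
      (ennreal (l powr (1 - q)) * (\<integral>\<^sup>+ \<omega>. ennreal (\<bar>f \<omega>\<bar> powr q) \<partial>M) +
       ennreal ((1 - l) powr (1 - q)) * (\<integral>\<^sup>+ \<omega>. ennreal (\<bar>g \<omega>\<bar> powr q) \<partial>M))"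
proof -
  have "(\<integral>\<^sup>+ \<omega>. ennreal (\<bar>h \<omega>\<bar> powr q) \<partial>M) \<le>
     (\<integral>\<^sup>+ \<omega>. ennreal (c powr q) * (ennreal (l powr (1 - q)) * ennreal (\<bar>f \<omega>\<bar> powr q) +
        ennreal ((1 - l) powr (1 - q)) * ennreal (\<bar>g \<omega>\<bar> powr q)) \<partial>M)"
  proof (rule nn_integral_mono_AE)
    show "AE \<omega> in M. ennreal (\<bar>h \<omega>\<bar> powr q) \<le> ennreal (c powr q) * (ennreal (l powr (1 - q)) * ennreal (\<bar>f \<omega>\<bar> powr q) +
        ennreal ((1 - l) powr (1 - q)) * ennreal (\<bar>g \<omega>\<bar> powr q))"
      using h
    proof (rule eventually_mono)
      fix \<omega> assume hw: "\<bar>h \<omega>\<bar> \<le> c * \<bar>f \<omega>\<bar> + c * \<bar>g \<omega>\<bar>"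
      have "\<bar>h \<omega>\<bar> powr q \<le> (c * \<bar>f \<omega>\<bar> + c * \<bar>g \<omega>\<bar>) powr q"
        using hw q by (intro powr_mono2) auto
      also have "\<dots> \<le> l powr (1 - q) * (c * \<bar>f \<omega>\<bar>) powr q + (1 - l) powr (1 - q) * (c * \<bar>g \<omega>\<bar>) powr q"
        by (rule conv_pow) (use q c l in auto)
      also have "\<dots> = c powr q * (l powr (1 - q) * \<bar>f \<omega>\<bar> powr q + (1 - l) powr (1 - q) * \<bar>g \<omega>\<bar> powr q)"
        using c by (simp add: powr_mult algebra_simps)
      finally have "ennreal (\<bar>h \<omega>\<bar> powr q) \<le> ennreal (c powr q * (l powr (1 - q) * \<bar>f \<omega>\<bar> powr q + (1 - l) powr (1 - q) * \<bar>g \<omega>\<bar> powr q))"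
        by (rule ennreal_leI)
      also have "\<dots> = ennreal (c powr q) * (ennreal (l powr (1 - q)) * ennreal (\<bar>f \<omega>\<bar> powr q) +
        ennreal ((1 - l) powr (1 - q)) * ennreal (\<bar>g \<omega>\<bar> powr q))"
        using l c by (simp only: ennreal_mult[symmetric] ennreal_plus[symmetric] powr_ge_zero mult_nonneg_nonneg add_nonneg_nonneg)
      finally show "ennreal (\<bar>h \<omega>\<bar> powr q) \<le> ennreal (c powr q) * (ennreal (l powr (1 - q)) * ennreal (\<bar>f \<omega>\<bar> powr q) +
        ennreal ((1 - l) powr (1 - q)) * ennreal (\<bar>g \<omega>\<bar> powr q))" .
    qed
  qed
  also have "\<dots> = ennreal (c powr q) *
      (ennreal (l powr (1 - q)) * (\<integral>\<^sup>+ \<omega>. ennreal (\<bar>f \<omega>\<bar> powr q) \<partial>M) +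
       ennreal ((1 - l) powr (1 - q)) * (\<integral>\<^sup>+ \<omega>. ennreal (\<bar>g \<omega>\<bar> powr q) \<partial>M))"
    by (simp add: nn_integral_cmult nn_integral_add)
  finally show ?thesis .
qed

lemma lim_bound:
  fixes z c q :: real
  assumes "\<And>l. 0 < l \<Longrightarrow> l < 1 \<Longrightarrow> z \<le> c * (1 - l) powr (1 - q)"
  shows "z \<le> c"
proof -
  have "((\<lambda>l. c * (1 - l) powr (1 - q)) \<longlongrightarrow> c * (1 - 0) powr (1 - q)) (at_right (0::real))"
    by (intro tendsto_intros) auto
  then have t: "((\<lambda>l. c * (1 - l) powr (1 - q)) \<longlongrightarrow> c) (at_right (0::real))" by simp
  have ev: "eventually (\<lambda>l. z \<le> c * (1 - l) powr (1 - q)) (at_right (0::real))"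
    unfolding eventually_at_right[of 0 "1::real", simplified] using assms by (intro exI[of _ 1]) auto
  show ?thesis by (rule tendsto_lowerbound[OF t ev]) simp
qed

lemma powr_helper:
  fixes x y q :: real
  assumes "x > 0" "y > 0"
  shows "(x / y) powr (1 - q) * x powr q = x * y powr (q - 1)"
proof -
  have a: "x powr (1 - q) * x powr q = x" using assms by (simp add: powr_add[symmetric])
  have b: "y powr (q - 1) * y powr (1 - q) = 1" using assms by (simp add: powr_add[symmetric])
  have "(x / y) powr (1 - q) * x powr q = (x powr (1 - q) * x powr q) / y powr (1 - q)"
    using assms by (simp add: powr_divide)
  also have "\<dots> = x * y powr (q - 1)" unfolding a using b assms
    by (simp add: field_simps)
  finally show ?thesis .
qed

lemma real_opt:
  fixes z a b K q :: real
  assumes q: "q \<ge> 1" and K: "K \<ge> 0" and a: "a \<ge> 0" and b: "b \<ge> 0" and z: "z \<ge> 0"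
    and H: "\<And>l. 0 < l \<Longrightarrow> l < 1 \<Longrightarrow> z \<le> K powr q * (l powr (1 - q) * a + (1 - l) powr (1 - q) * b)"
  shows "z powr (1 / q) \<le> K * (a powr (1 / q) + b powr (1 / q))"
proof -
  define \<alpha> where "\<alpha> = a powr (1 / q)"
  define \<beta> where "\<beta> = b powr (1 / q)"
  have q0: "q > 0" using q by simp
  have aa: "a = \<alpha> powr q" unfolding \<alpha>_def using a q0 by (simp add: powr_powr)
  have bb: "b = \<beta> powr q" unfolding \<beta>_def using b q0 by (simp add: powr_powr)
  have al: "\<alpha> \<ge> 0" "\<beta> \<ge> 0" unfolding \<alpha>_def \<beta>_def by auto
  have fin: "z powr (1 / q) \<le> K * (\<alpha> + \<beta>)" if zb: "z \<le> (K * (\<alpha> + \<beta>)) powr q"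
  proof -
    have "z powr (1 / q) \<le> ((K * (\<alpha> + \<beta>)) powr q) powr (1 / q)"
      using zb z q0 by (intro powr_mono2) auto
    also have "\<dots> = K * (\<alpha> + \<beta>)" using K al q0 by (simp add: powr_powr)
    finally show ?thesis .
  qed
  consider "\<alpha> = 0" | "\<beta> = 0" | "\<alpha> > 0" "\<beta> > 0" using al by linarith
  then have "z \<le> (K * (\<alpha> + \<beta>)) powr q"
  proof cases
    case 1
    have "z \<le> K powr q * b" 
    proof (rule lim_bound)
      fix l :: real assume "0 < l" "l < 1"
      then show "z \<le> K powr q * b * (1 - l) powr (1 - q)"
        using H[of l] 1 aa q0 by (simp add: mult_ac)
    qed
    then show ?thesis using 1 bb K al by (simp add: powr_mult)
  next
    case 2
    have "z \<le> K powr q * a" 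
    proof (rule lim_bound)
      fix l :: real assume "0 < l" "l < 1"
      then show "z \<le> K powr q * a * (1 - l) powr (1 - q)"
        using H[of "1 - l"] 2 bb q0 by (simp add: mult_ac)
    qed
    then show ?thesis using 2 aa K al by (simp add: powr_mult)
  next
    case 3
    define l where "l = \<alpha> / (\<alpha> + \<beta>)"
    have l: "0 < l" "l < 1" unfolding l_def using 3 by (auto simp: field_simps)
    have l1: "1 - l = \<beta> / (\<alpha> + \<beta>)" unfolding l_def using 3 by (auto simp: field_simps)
    have e1: "l powr (1 - q) * a = \<alpha> * (\<alpha> + \<beta>) powr (q - 1)"
      unfolding l_def aa using 3 by (intro powr_helper) auto
    have e2: "(1 - l) powr (1 - q) * b = \<beta> * (\<alpha> + \<beta>) powr (q - 1)"
      unfolding l1 bb using 3 by (intro powr_helper) auto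
    have "z \<le> K powr q * (\<alpha> * (\<alpha> + \<beta>) powr (q - 1) + \<beta> * (\<alpha> + \<beta>) powr (q - 1))"
      using H[OF l] unfolding e1 e2 .
    also have "\<dots> = K powr q * (\<alpha> + \<beta>) powr q"
    proof -
      have "(\<alpha> + \<beta>) * (\<alpha> + \<beta>) powr (q - 1) = (\<alpha> + \<beta>) powr q"
        using 3 by (simp add: powr_mult_base)
      then show ?thesis by (simp add: algebra_simps)
    qed
    also have "\<dots> = (K * (\<alpha> + \<beta>)) powr q" using K al by (simp add: powr_mult)
    finally show ?thesis .
  qed
  then show ?thesis using fin unfolding \<alpha>_def \<beta>_def by simp
qed

lemma enn_powr_ennreal: "x \<ge> 0 \<Longrightarrow> enn_powr (ennreal x) p = ennreal (x powr p)"
  by (simp add: enn_powr_def)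

lemma enn_powr_top: "enn_powr top p = top"
  by (simp add: enn_powr_def)

lemma E1:
  fixes Z A :: ennreal
  assumes q: "q \<ge> 1" and C: "C \<ge> 0" and Z: "Z \<le> ennreal C * A"
  shows "enn_powr Z (1 / q) \<le> ennreal (C powr (1 / q)) * enn_powr A (1 / q)"
proof (cases "C = 0")
  case True
  then have "Z = 0" using Z by simp
  then show ?thesis by (simp add: enn_powr_def)
next
  case False
  then have Cp: "C > 0" using C by simp
  show ?thesis
  proof (cases "A = \<infinity>")
    case True
    then show ?thesis using Cp by (simp add: enn_powr_top ennreal_mult_top)
  next
    case False
    then obtain a where a: "A = ennreal a" "a \<ge> 0" by (cases A) auto
    have "Z \<le> ennreal (C * a)" using Z a C by (simp add: ennreal_mult)
    moreover have "0 \<le> C * a" using C a by simp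
    ultimately obtain z where z: "Z = ennreal z" "z \<ge> 0" "z \<le> C * a"
      by (cases Z) (auto simp: ennreal_le_iff top_unique)
    have "z powr (1 / q) \<le> (C * a) powr (1 / q)" using z q by (intro powr_mono2) auto
    also have "\<dots> = C powr (1 / q) * a powr (1 / q)" using C a by (simp add: powr_mult)
    finally have "ennreal (z powr (1 / q)) \<le> ennreal (C powr (1 / q) * a powr (1 / q))" by (rule ennreal_leI)
    then show ?thesis using z a C by (simp add: enn_powr_ennreal ennreal_mult)
  qed
qed

lemma E2:
  fixes Z A B :: ennreal
  assumes q: "q \<ge> 1" and K: "K \<ge> 0"
    and H: "\<And>l. 0 < l \<Longrightarrow> l < 1 \<Longrightarrow> Z \<le> ennreal (K powr q) * (ennreal (l powr (1 - q)) * A + ennreal ((1 - l) powr (1 - q)) * B)"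
  shows "enn_powr Z (1 / q) \<le> ennreal K * (enn_powr A (1 / q) + enn_powr B (1 / q))"
proof (cases "K = 0")
  case True
  then have "Z = 0" using H[of "1/2"] q by simp
  then show ?thesis by (simp add: enn_powr_def)
next
  case False
  then have Kp: "K > 0" using K by simp
  show ?thesis
  proof (cases "A = \<infinity> \<or> B = \<infinity>")
    case True
    then show ?thesis using Kp by (auto simp: enn_powr_top ennreal_mult_top)
  next
    case False
    then obtain a b where a: "A = ennreal a" "a \<ge> 0" and b: "B = ennreal b" "b \<ge> 0"
      by (cases A; cases B) auto
    have H': "Z \<le> ennreal (K powr q * (l powr (1 - q) * a + (1 - l) powr (1 - q) * b))" if "0 < l" "l < 1" for l
    proof -
      have "ennreal (K powr q * (l powr (1 - q) * a + (1 - l) powr (1 - q) * b)) =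
        ennreal (K powr q) * (ennreal (l powr (1 - q)) * ennreal a + ennreal ((1 - l) powr (1 - q)) * ennreal b)"
        using a b by (simp only: ennreal_mult[symmetric] ennreal_plus[symmetric] powr_ge_zero mult_nonneg_nonneg add_nonneg_nonneg)
      then show ?thesis using H[OF that] a b by simp
    qed
    obtain z where z: "Z = ennreal z" "z \<ge> 0"
      using H'[of "1/2"] by (cases Z) (auto simp: top_unique)
    have "z powr (1 / q) \<le> K * (a powr (1 / q) + b powr (1 / q))"
    proof (rule real_opt[OF q K a(2) b(2) z(2)])
      fix l :: real assume l: "0 < l" "l < 1"
      have "0 \<le> K powr q * (l powr (1 - q) * a + (1 - l) powr (1 - q) * b)"
        using a b by (intro mult_nonneg_nonneg add_nonneg_nonneg) auto
      then show "z \<le> K powr q * (l powr (1 - q) * a + (1 - l) powr (1 - q) * b)"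
        using H'[OF l] z by (simp add: ennreal_le_iff)
    qed
    then have "ennreal (z powr (1 / q)) \<le> ennreal (K * (a powr (1 / q) + b powr (1 / q)))" by (rule ennreal_leI)
    then show ?thesis using z a b K by (simp add: enn_powr_ennreal ennreal_mult ennreal_plus[symmetric] del: ennreal_plus)
  qed
qed

lemma unif_AE:
  fixes P :: "'w measure" and u :: "'w \<Rightarrow> real"
  assumes um[measurable]: "u \<in> borel_measurable P" and du: "distr P borel u = uniform_measure lborel {0..1}"
  shows "AE \<omega> in P. 0 < u \<omega> \<and> u \<omega> < 1"
proof -
  have "AE v in uniform_measure lborel {0..1::real}. 0 < v \<and> v < 1"
  proof (rule AE_uniform_measureI)
    show "AE x in lborel. x \<in> {0..1::real} \<longrightarrow> 0 < x \<and> x < 1"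
      using AE_lborel_singleton[of "0::real"] AE_lborel_singleton[of "1::real"]
      by eventually_elim auto
  qed simp
  then have "AE v in distr P borel u. 0 < v \<and> v < 1" unfolding du .
  then show ?thesis by (subst (asm) AE_distr_iff) auto
qed

lemma unif_int:
  fixes P :: "'w measure" and h :: "real \<Rightarrow> ennreal" and u :: "'w \<Rightarrow> real"
  assumes um[measurable]: "u \<in> borel_measurable P" and du: "distr P borel u = uniform_measure lborel {0..1}"
    and hm[measurable]: "h \<in> borel_measurable borel"
  shows "(\<integral>\<^sup>+ \<omega>. h (u \<omega>) \<partial>P) = (\<integral>\<^sup>+ v \<in> {0<..<1}. h v \<partial>lborel)"
proof -
  have "(\<integral>\<^sup>+ \<omega>. h (u \<omega>) \<partial>P) = (\<integral>\<^sup>+ v. h v \<partial>distr P borel u)"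
    by (rule nn_integral_distr[symmetric]) auto
  also have "\<dots> = (\<integral>\<^sup>+ v. h v \<partial>uniform_measure lborel {0..1})" unfolding du ..
  also have "\<dots> = (\<integral>\<^sup>+ v. h v * indicator {0..1} v \<partial>lborel)"
    by (subst nn_integral_uniform_measure) (auto simp: divide_ennreal_def)
  also have "\<dots> = (\<integral>\<^sup>+ v \<in> {0<..<1}. h v \<partial>lborel)"
  proof (rule nn_integral_cong_AE)
    show "AE x in lborel. h x * indicator {0..1} x = h x * indicator {0<..<1::real} x"
      using AE_lborel_singleton[of "0::real"] AE_lborel_singleton[of "1::real"]
      by eventually_elim (auto simp: indicator_def)
  qed
  finally show ?thesis .
qed

lemma per_t:
  fixes P :: "'w measure" and u u' :: "'w \<Rightarrow> real" and F G g :: "real \<Rightarrow> real"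
  assumes P: "prob_space P" and q: "q \<ge> 1"
    and um[measurable]: "u \<in> borel_measurable P" and u'm[measurable]: "u' \<in> borel_measurable P"
    and du: "distr P borel u = uniform_measure lborel {0..1}"
    and du': "distr P borel u' = uniform_measure lborel {0..1}"
    and F: "distfun_moment q F" and G: "distfun_moment q G"
    and gm: "g \<in> borel_measurable borel" and gnn: "\<forall>x. 0 \<le> g x"
    and Gdef: "\<forall>x. G x = (\<integral>y\<in>{..x}. g y \<partial>lborel)"
    and sm: "strict_mono G" and gK: "\<forall>x. \<bar>g x\<bar> \<le> K"
  shows "\<And>l. 0 < l \<Longrightarrow> l < 1 \<Longrightarrow> (\<integral>\<^sup>+ \<omega>. ennreal (\<bar>u \<omega> - u' \<omega>\<bar> powr q) \<partial>P) \<le>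
      ennreal (K powr q) * (ennreal (l powr (1 - q)) *
        (\<integral>\<^sup>+ \<omega>. ennreal (\<bar>gen_inv F (u \<omega>) - gen_inv G (u' \<omega>)\<bar> powr q) \<partial>P)
       + ennreal ((1 - l) powr (1 - q)) * Wq_pow q F G)"
    and "(\<integral>\<^sup>+ \<omega>. ennreal (\<bar>u \<omega> - u' \<omega>\<bar> powr q) \<partial>P) \<le>
      ennreal ((2 * K) powr q) * (\<integral>\<^sup>+ \<omega>. ennreal (\<bar>gen_inv F (u \<omega>) - gen_inv G (u' \<omega>)\<bar> powr q) \<partial>P)"
proof -
  interpret prob_space P by fact
  note Fp = distfun_props[OF F] and Gp = distfun_props[OF G]
  have K0: "K \<ge> 0" using gK by (meson abs_ge_zero order_trans)
  have gK': "g x \<le> K" for x using gK by (meson abs_ge_self order_trans)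
  have lipG: "\<bar>G a - G b\<bar> \<le> K * \<bar>a - b\<bar>" for a b
  proof (cases "a \<le> b")
    case True
    have "G b - G a \<le> K * (b - a)" by (rule lip_G[OF gm _ gK' _ sm Gp(4) True]) (use gnn Gdef in auto)
    moreover have "G a \<le> G b" using Gp(1) True by (simp add: mono_def)
    ultimately show ?thesis using True by simp
  next
    case False
    then have ba: "b \<le> a" by simp
    have "G a - G b \<le> K * (a - b)" by (rule lip_G[OF gm _ gK' _ sm Gp(4) ba]) (use gnn Gdef in auto)
    moreover have "G b \<le> G a" using Gp(1) ba by (simp add: mono_def)
    ultimately show ?thesis using ba by simp
  qed
  have Gcont: "continuous_on UNIV G"
  proof (rule lipschitz_on_continuous_on)
    show "K-lipschitz_on UNIV G"
      by (rule lipschitz_onI) (use lipG K0 in \<open>auto simp: dist_real_def\<close>)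
  qed
  have Ginv: "G (gen_inv G v) = v" if "0 < v" "v < 1" for v
    by (rule gen_inv_right_inv[OF sm Gcont Gp(2) Gp(3) that])
  have [measurable]: "gen_inv F \<in> borel_measurable borel" by (rule gen_inv_meas[OF Fp])
  have [measurable]: "gen_inv G \<in> borel_measurable borel" by (rule gen_inv_meas[OF Gp])
  have [measurable]: "G \<in> borel_measurable borel" by (rule borel_measurable_mono[OF Gp(1)])
  have AEu: "AE \<omega> in P. 0 < u \<omega> \<and> u \<omega> < 1" by (rule unif_AE[OF um du])
  have AEu': "AE \<omega> in P. 0 < u' \<omega> \<and> u' \<omega> < 1" by (rule unif_AE[OF u'm du'])
  have W: "Wq_pow q F G = (\<integral>\<^sup>+ \<omega>. ennreal (\<bar>gen_inv F (u \<omega>) - gen_inv G (u \<omega>)\<bar> powr q) \<partial>P)"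
    unfolding Wq_pow_def
    by (rule unif_int[OF um du, of "\<lambda>v. ennreal (\<bar>gen_inv F v - gen_inv G v\<bar> powr q)", symmetric]) measurable
  show "(\<integral>\<^sup>+ \<omega>. ennreal (\<bar>u \<omega> - u' \<omega>\<bar> powr q) \<partial>P) \<le>
      ennreal (K powr q) * (ennreal (l powr (1 - q)) *
        (\<integral>\<^sup>+ \<omega>. ennreal (\<bar>gen_inv F (u \<omega>) - gen_inv G (u' \<omega>)\<bar> powr q) \<partial>P)
       + ennreal ((1 - l) powr (1 - q)) * Wq_pow q F G)" if l: "0 < l" "l < 1" for l
    unfolding W
  proof (rule split_int[OF q K0 l])
    show "AE \<omega> in P. \<bar>u \<omega> - u' \<omega>\<bar> \<le> K * \<bar>gen_inv F (u \<omega>) - gen_inv G (u' \<omega>)\<bar> + K * \<bar>gen_inv F (u \<omega>) - gen_inv G (u \<omega>)\<bar>"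
      using AEu AEu'
    proof eventually_elim
      case (elim \<omega>)
      have e1: "u \<omega> = G (gen_inv G (u \<omega>))" using Ginv elim by simp
      have e2: "u' \<omega> = G (gen_inv G (u' \<omega>))" using Ginv elim by simp
      have "\<bar>u \<omega> - u' \<omega>\<bar> \<le> \<bar>G (gen_inv F (u \<omega>)) - G (gen_inv G (u' \<omega>))\<bar> + \<bar>G (gen_inv F (u \<omega>)) - G (gen_inv G (u \<omega>))\<bar>"
        using e1 e2 by linarith
      also have "\<dots> \<le> K * \<bar>gen_inv F (u \<omega>) - gen_inv G (u' \<omega>)\<bar> + K * \<bar>gen_inv F (u \<omega>) - gen_inv G (u \<omega>)\<bar>"
        by (intro add_mono lipG)
      finally show ?case .
    qed
  qed measurable
  let ?X = "\<lambda>\<omega>. G (gen_inv F (u \<omega>))"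
  have A1: "(\<integral>\<^sup>+ \<omega>. ennreal (\<bar>u \<omega> - ?X \<omega>\<bar> powr q) \<partial>P) \<le> (\<integral>\<^sup>+ \<omega>. ennreal (\<bar>u' \<omega> - ?X \<omega>\<bar> powr q) \<partial>P)"
  proof (rule comon[OF P q, where Om = "{\<omega>\<in>space P. 0 < u \<omega> \<and> u \<omega> < 1}"])
    show "distr P borel u' = distr P borel u" using du du' by simp
    show "AE \<omega> in P. \<omega> \<in> {\<omega> \<in> space P. 0 < u \<omega> \<and> u \<omega> < 1}" using AEu AE_space by eventually_elim auto
    fix \<omega> \<omega>' assume w: "\<omega> \<in> {\<omega> \<in> space P. 0 < u \<omega> \<and> u \<omega> < 1}" "\<omega>' \<in> {\<omega> \<in> space P. 0 < u \<omega> \<and> u \<omega> < 1}"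
    show "?X \<omega> < ?X \<omega>' \<Longrightarrow> u \<omega> \<le> u \<omega>'"
    proof (rule ccontr)
      assume "?X \<omega> < ?X \<omega>'" "\<not> u \<omega> \<le> u \<omega>'"
      then have "gen_inv F (u \<omega>') \<le> gen_inv F (u \<omega>)" using w by (intro gen_inv_mono[OF Fp(1-3)]) auto
      then have "?X \<omega>' \<le> ?X \<omega>" using Gp(1) by (simp add: mono_def)
      then show False using \<open>?X \<omega> < ?X \<omega>'\<close> by simp
    qed
    show "u \<omega> < u \<omega>' \<Longrightarrow> ?X \<omega> \<le> ?X \<omega>'"
    proof -
      assume "u \<omega> < u \<omega>'"
      then have "gen_inv F (u \<omega>) \<le> gen_inv F (u \<omega>')" using w by (intro gen_inv_mono[OF Fp(1-3)]) auto
      then show "?X \<omega> \<le> ?X \<omega>'" using Gp(1) by (simp add: mono_def)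
    qed
  qed measurable
  have A2: "(\<integral>\<^sup>+ \<omega>. ennreal (\<bar>?X \<omega> - u' \<omega>\<bar> powr q) \<partial>P) \<le>
      ennreal (K powr q) * (\<integral>\<^sup>+ \<omega>. ennreal (\<bar>gen_inv F (u \<omega>) - gen_inv G (u' \<omega>)\<bar> powr q) \<partial>P)"
  proof -
    have "(\<integral>\<^sup>+ \<omega>. ennreal (\<bar>?X \<omega> - u' \<omega>\<bar> powr q) \<partial>P) \<le>
      (\<integral>\<^sup>+ \<omega>. ennreal (K powr q) * ennreal (\<bar>gen_inv F (u \<omega>) - gen_inv G (u' \<omega>)\<bar> powr q) \<partial>P)"
    proof (rule nn_integral_mono_AE)
      show "AE \<omega> in P. ennreal (\<bar>?X \<omega> - u' \<omega>\<bar> powr q) \<le> ennreal (K powr q) * ennreal (\<bar>gen_inv F (u \<omega>) - gen_inv G (u' \<omega>)\<bar> powr q)"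
        using AEu'
      proof eventually_elim
        case (elim \<omega>)
        have e2: "u' \<omega> = G (gen_inv G (u' \<omega>))" using Ginv elim by simp
        have "\<bar>?X \<omega> - u' \<omega>\<bar> powr q \<le> (K * \<bar>gen_inv F (u \<omega>) - gen_inv G (u' \<omega>)\<bar>) powr q"
          using lipG[of "gen_inv F (u \<omega>)" "gen_inv G (u' \<omega>)"] e2 q by (intro powr_mono2) auto
        also have "\<dots> = K powr q * \<bar>gen_inv F (u \<omega>) - gen_inv G (u' \<omega>)\<bar> powr q"
          using K0 by (simp add: powr_mult)
        finally show ?case by (simp add: ennreal_mult[symmetric] ennreal_leI)
      qed
    qed
    also have "\<dots> = ennreal (K powr q) * (\<integral>\<^sup>+ \<omega>. ennreal (\<bar>gen_inv F (u \<omega>) - gen_inv G (u' \<omega>)\<bar> powr q) \<partial>P)"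
      by (rule nn_integral_cmult) measurable
    finally show ?thesis .
  qed
  have A2': "(\<integral>\<^sup>+ \<omega>. ennreal (\<bar>u' \<omega> - ?X \<omega>\<bar> powr q) \<partial>P) = (\<integral>\<^sup>+ \<omega>. ennreal (\<bar>?X \<omega> - u' \<omega>\<bar> powr q) \<partial>P)"
    by (simp add: abs_minus_commute)
  have S: "(\<integral>\<^sup>+ \<omega>. ennreal (\<bar>u \<omega> - u' \<omega>\<bar> powr q) \<partial>P) \<le> ennreal (1 powr q) *
      (ennreal ((1/2) powr (1 - q)) * (\<integral>\<^sup>+ \<omega>. ennreal (\<bar>u \<omega> - ?X \<omega>\<bar> powr q) \<partial>P) +
       ennreal ((1 - 1/2) powr (1 - q)) * (\<integral>\<^sup>+ \<omega>. ennreal (\<bar>?X \<omega> - u' \<omega>\<bar> powr q) \<partial>P))"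
    by (rule split_int[OF q]) auto
  have half: "(1/2::real) powr (1 - q) = 2 powr (q - 1)"
    by (simp add: powr_divide powr_minus_divide[symmetric] powr_minus)
  have half2: "(1 - 1/2::real) powr (1 - q) = 2 powr (q - 1)"
    using half by simp
  have two: "2 * 2 powr (q - 1) = (2::real) powr q"
    using powr_mult_base[of 2 "q - 1"] by simp
  define I2 where "I2 = (\<integral>\<^sup>+ \<omega>. ennreal (\<bar>?X \<omega> - u' \<omega>\<bar> powr q) \<partial>P)"
  have "(\<integral>\<^sup>+ \<omega>. ennreal (\<bar>u \<omega> - u' \<omega>\<bar> powr q) \<partial>P) \<le> ennreal (2 powr (q - 1)) * I2 + ennreal (2 powr (q - 1)) * I2"
  proof -
    have A1': "(\<integral>\<^sup>+ \<omega>. ennreal (\<bar>u \<omega> - ?X \<omega>\<bar> powr q) \<partial>P) \<le> I2" using A1 A2' unfolding I2_def by simp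
    have S': "(\<integral>\<^sup>+ \<omega>. ennreal (\<bar>u \<omega> - u' \<omega>\<bar> powr q) \<partial>P) \<le> ennreal (2 powr (q - 1)) * (\<integral>\<^sup>+ \<omega>. ennreal (\<bar>u \<omega> - ?X \<omega>\<bar> powr q) \<partial>P) + ennreal (2 powr (q - 1)) * I2"
      using S unfolding half half2 I2_def by simp
    show ?thesis
      by (rule order_trans[OF S' add_right_mono[OF mult_left_mono[OF A1']]]) simp
  qed
  also have "\<dots> = ennreal (2 powr q) * I2"
  proof -
    have p: "ennreal (2 powr (q - 1) + 2 powr (q - 1)) = ennreal (2 powr (q - 1)) + ennreal (2 powr (q - 1))"
      by (rule ennreal_plus) auto
    have "2 powr (q - 1) + 2 powr (q - 1) = (2::real) powr q" using two by simp
    then have "ennreal (2 powr (q - 1)) + ennreal (2 powr (q - 1)) = ennreal (2 powr q)" using p by simp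
    then show ?thesis by (simp only: distrib_right[symmetric])
  qed
  also have "\<dots> \<le> ennreal (2 powr q) * (ennreal (K powr q) * (\<integral>\<^sup>+ \<omega>. ennreal (\<bar>gen_inv F (u \<omega>) - gen_inv G (u' \<omega>)\<bar> powr q) \<partial>P))"
    unfolding I2_def by (intro mult_left_mono A2) auto
  also have "\<dots> = ennreal ((2 * K) powr q) * (\<integral>\<^sup>+ \<omega>. ennreal (\<bar>gen_inv F (u \<omega>) - gen_inv G (u' \<omega>)\<bar> powr q) \<partial>P)"
  proof -
    have "(2 * K) powr q = 2 powr q * K powr q" using K0 by (simp add: powr_mult)
    then have "ennreal ((2 * K) powr q) = ennreal (2 powr q) * ennreal (K powr q)"
      by (simp only: ennreal_mult[symmetric] powr_ge_zero)
    then show ?thesis by (simp only: mult.assoc)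
  qed
  finally show "(\<integral>\<^sup>+ \<omega>. ennreal (\<bar>u \<omega> - u' \<omega>\<bar> powr q) \<partial>P) \<le>
      ennreal ((2 * K) powr q) * (\<integral>\<^sup>+ \<omega>. ennreal (\<bar>gen_inv F (u \<omega>) - gen_inv G (u' \<omega>)\<bar> powr q) \<partial>P)" .
qed

theorem theorem4p14:
  fixes a b :: "'a::euclidean_space"
    and \<mu> :: "'a measure" and P :: "'w measure" and q :: real
    and UX UY :: "'a \<Rightarrow> 'w \<Rightarrow> real"
    and FX FY fY :: "'a \<Rightarrow> real \<Rightarrow> real"
  defines "T \<equiv> cbox a b"
    and "Xt \<equiv> (\<lambda>t \<omega>. gen_inv (FX t) (UX t \<omega>))"
    and "Yt \<equiv> (\<lambda>t \<omega>. gen_inv (FY t) (UY t \<omega>))"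
    and "K \<equiv> (SUP p \<in> cbox a b \<times> UNIV. \<bar>fY (fst p) (snd p)\<bar>)"
  assumes mu_sets: "sets \<mu> = sets (restrict_space borel T)"
    and mu_fin: "finite_measure \<mu>"
    and P: "prob_space P"
    and q: "q \<ge> 1"
    and copX: "copula_process P T UX" and copY: "copula_process P T UY"
    and FX: "\<forall>t\<in>T. distfun_moment q (FX t)"
    and FY: "\<forall>t\<in>T. distfun_moment q (FY t)"
    and dens: "\<forall>t\<in>T. fY t \<in> borel_measurable borel \<and> (\<forall>x. 0 \<le> fY t x) \<and>
                 (\<forall>x. FY t x = (\<integral>y\<in>{..x}. fY t y \<partial>lborel))"
    and smono: "\<forall>t\<in>T. strict_mono (FY t)"
    and bdd: "\<exists>C. \<forall>t\<in>T. \<forall>x. \<bar>fY t x\<bar> \<le> C"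
    and measU: "(\<lambda>(t, \<omega>). UX t \<omega>) \<in> borel_measurable (\<mu> \<Otimes>\<^sub>M P)"
               "(\<lambda>(t, \<omega>). UY t \<omega>) \<in> borel_measurable (\<mu> \<Otimes>\<^sub>M P)"
    and measXY: "(\<lambda>(t, \<omega>). Xt t \<omega>) \<in> borel_measurable (\<mu> \<Otimes>\<^sub>M P)"
               "(\<lambda>(t, \<omega>). Yt t \<omega>) \<in> borel_measurable (\<mu> \<Otimes>\<^sub>M P)"
    and measW: "(\<lambda>t. Wq_pow q (FX t) (FY t)) \<in> borel_measurable \<mu>"
  shows "Lq_norm (\<mu> \<Otimes>\<^sub>M P) q (\<lambda>(t, \<omega>). UX t \<omega> - UY t \<omega>)
           \<le> ennreal K * (Lq_norm (\<mu> \<Otimes>\<^sub>M P) q (\<lambda>(t, \<omega>). Xt t \<omega> - Yt t \<omega>)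
                + enn_powr (\<integral>\<^sup>+ t. Wq_pow q (FX t) (FY t) \<partial>\<mu>) (1 / q))
       \<and> Lq_norm (\<mu> \<Otimes>\<^sub>M P) q (\<lambda>(t, \<omega>). UX t \<omega> - UY t \<omega>)
           \<le> 2 * ennreal K * Lq_norm (\<mu> \<Otimes>\<^sub>M P) q (\<lambda>(t, \<omega>). Xt t \<omega> - Yt t \<omega>)"
proof -
  interpret P: prob_space P by (rule P)
  have spmu: "space \<mu> = T"
    using sets_eq_imp_space_eq[OF mu_sets] by (simp add: space_restrict_space)
  note [measurable] = measU measXY measW
  have Ton: "integral\<^sup>N (\<mu> \<Otimes>\<^sub>M P) f = (\<integral>\<^sup>+ t. (\<integral>\<^sup>+ \<omega>. f (t, \<omega>) \<partial>P) \<partial>\<mu>)"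
    if "f \<in> borel_measurable (\<mu> \<Otimes>\<^sub>M P)" for f
    using P.nn_integral_fst[OF that] by simp
  define NU where "NU t = (\<integral>\<^sup>+ \<omega>. ennreal (\<bar>UX t \<omega> - UY t \<omega>\<bar> powr q) \<partial>P)" for t
  define NXY where "NXY t = (\<integral>\<^sup>+ \<omega>. ennreal (\<bar>Xt t \<omega> - Yt t \<omega>\<bar> powr q) \<partial>P)" for t
  have LU: "Lq_norm (\<mu> \<Otimes>\<^sub>M P) q (\<lambda>(t, \<omega>). UX t \<omega> - UY t \<omega>) = enn_powr (\<integral>\<^sup>+ t. NU t \<partial>\<mu>) (1 / q)"
    unfolding Lq_norm_def NU_def by (subst Ton) (auto simp: split_beta')
  have LXY: "Lq_norm (\<mu> \<Otimes>\<^sub>M P) q (\<lambda>(t, \<omega>). Xt t \<omega> - Yt t \<omega>) = enn_powr (\<integral>\<^sup>+ t. NXY t \<partial>\<mu>) (1 / q)"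
    unfolding Lq_norm_def NXY_def by (subst Ton) (auto simp: split_beta')
  have NXYm[measurable]: "NXY \<in> borel_measurable \<mu>"
  proof -
    have "(\<lambda>(t, \<omega>). ennreal (\<bar>Xt t \<omega> - Yt t \<omega>\<bar> powr q)) \<in> borel_measurable (\<mu> \<Otimes>\<^sub>M P)"
      using measXY by (simp add: split_beta')
    then show ?thesis unfolding NXY_def by (rule P.borel_measurable_nn_integral)
  qed
  show ?thesis
  proof (cases "T = {}")
    case True
    then have "(\<integral>\<^sup>+ t. NU t \<partial>\<mu>) = 0" using spmu by (simp add: nn_integral_empty)
    then have "Lq_norm (\<mu> \<Otimes>\<^sub>M P) q (\<lambda>(t, \<omega>). UX t \<omega> - UY t \<omega>) = 0"
      unfolding LU by (simp add: enn_powr_def)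
    then show ?thesis by simp
  next
    case False
    obtain C where C: "\<forall>t\<in>T. \<forall>x. \<bar>fY t x\<bar> \<le> C" using bdd by auto
    have bddK: "bdd_above ((\<lambda>p. \<bar>fY (fst p) (snd p)\<bar>) ` (cbox a b \<times> UNIV))"
      using C unfolding T_def by (auto intro!: bdd_aboveI2)
    have fK: "\<forall>x. \<bar>fY t x\<bar> \<le> K" if "t \<in> T" for t
    proof
      fix x show "\<bar>fY t x\<bar> \<le> K"
        unfolding K_def using cSUP_upper[OF _ bddK, of "(t, x)"] that unfolding T_def by auto
    qed
    obtain t0 where "t0 \<in> T" using False by auto
    have K0: "K \<ge> 0" using fK[OF \<open>t0 \<in> T\<close>] by (meson abs_ge_zero order_trans)
    have pt: "(\<forall>l. 0 < l \<and> l < 1 \<longrightarrow> NU t \<le> ennreal (K powr q) * (ennreal (l powr (1 - q)) * NXY t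
         + ennreal ((1 - l) powr (1 - q)) * Wq_pow q (FX t) (FY t)))
       \<and> NU t \<le> ennreal ((2 * K) powr q) * NXY t" if t: "t \<in> T" for t
    proof -
      have cx: "UX t \<in> borel_measurable P" "distr P borel (UX t) = uniform_measure lborel {0..1}"
        using copX t unfolding copula_process_def by auto
      have cy: "UY t \<in> borel_measurable P" "distr P borel (UY t) = uniform_measure lborel {0..1}"
        using copY t unfolding copula_process_def by auto
      note r = per_t[OF P q cx(1) cy(1) cx(2) cy(2) FX[rule_format, OF t] FY[rule_format, OF t]
          _ _ _ smono[rule_format, OF t] fK[OF t]]
      have d: "fY t \<in> borel_measurable borel" "\<forall>x. 0 \<le> fY t x" "\<forall>x. FY t x = (\<integral>y\<in>{..x}. fY t y \<partial>lborel)"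
        using dens t by auto
      show ?thesis using r[OF d] unfolding NU_def NXY_def Xt_def Yt_def by auto
    qed
    have ineq2: "(\<integral>\<^sup>+ t. NU t \<partial>\<mu>) \<le> ennreal ((2 * K) powr q) * (\<integral>\<^sup>+ t. NXY t \<partial>\<mu>)"
    proof -
      have "(\<integral>\<^sup>+ t. NU t \<partial>\<mu>) \<le> (\<integral>\<^sup>+ t. ennreal ((2 * K) powr q) * NXY t \<partial>\<mu>)"
        by (rule nn_integral_mono) (use pt spmu in auto)
      also have "\<dots> = ennreal ((2 * K) powr q) * (\<integral>\<^sup>+ t. NXY t \<partial>\<mu>)"
        by (rule nn_integral_cmult) measurable
      finally show ?thesis .
    qed
    have ineq1: "(\<integral>\<^sup>+ t. NU t \<partial>\<mu>) \<le> ennreal (K powr q) * (ennreal (l powr (1 - q)) * (\<integral>\<^sup>+ t. NXY t \<partial>\<mu>)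
         + ennreal ((1 - l) powr (1 - q)) * (\<integral>\<^sup>+ t. Wq_pow q (FX t) (FY t) \<partial>\<mu>))"
      if l: "0 < l" "l < 1" for l
    proof -
      have "(\<integral>\<^sup>+ t. NU t \<partial>\<mu>) \<le> (\<integral>\<^sup>+ t. ennreal (K powr q) * (ennreal (l powr (1 - q)) * NXY t
         + ennreal ((1 - l) powr (1 - q)) * Wq_pow q (FX t) (FY t)) \<partial>\<mu>)"
        by (rule nn_integral_mono) (use pt spmu l in auto)
      also have "\<dots> = ennreal (K powr q) * (ennreal (l powr (1 - q)) * (\<integral>\<^sup>+ t. NXY t \<partial>\<mu>)
         + ennreal ((1 - l) powr (1 - q)) * (\<integral>\<^sup>+ t. Wq_pow q (FX t) (FY t) \<partial>\<mu>))"
        by (simp add: nn_integral_cmult nn_integral_add)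
      finally show ?thesis .
    qed
    have R1: "Lq_norm (\<mu> \<Otimes>\<^sub>M P) q (\<lambda>(t, \<omega>). UX t \<omega> - UY t \<omega>)
           \<le> ennreal K * (Lq_norm (\<mu> \<Otimes>\<^sub>M P) q (\<lambda>(t, \<omega>). Xt t \<omega> - Yt t \<omega>)
                + enn_powr (\<integral>\<^sup>+ t. Wq_pow q (FX t) (FY t) \<partial>\<mu>) (1 / q))"
      unfolding LU LXY by (rule E2[OF q K0 ineq1])
    have R2: "Lq_norm (\<mu> \<Otimes>\<^sub>M P) q (\<lambda>(t, \<omega>). UX t \<omega> - UY t \<omega>)
           \<le> 2 * ennreal K * Lq_norm (\<mu> \<Otimes>\<^sub>M P) q (\<lambda>(t, \<omega>). Xt t \<omega> - Yt t \<omega>)"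
    proof -
      have "enn_powr (\<integral>\<^sup>+ t. NU t \<partial>\<mu>) (1 / q) \<le> ennreal (((2 * K) powr q) powr (1 / q)) * enn_powr (\<integral>\<^sup>+ t. NXY t \<partial>\<mu>) (1 / q)"
        by (rule E1[OF q _ ineq2]) simp
      also have "((2 * K) powr q) powr (1 / q) = 2 * K" using K0 q by (simp add: powr_powr)
      also have "ennreal (2 * K) = 2 * ennreal K" using K0 by (simp add: ennreal_mult)
      finally show ?thesis unfolding LU LXY .
    qed
    show ?thesis using R1 R2 by blast
  qed
qed

end
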